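(* Let $(x''_n)_n=((x_n,x'_n))_n$ be a sequence in $G''=G\times G'$ with $d(x_n,o)\to\infty$ and $d'(x'_n,o')\to\infty$. Then, after passing to a subsequence, the perturbed diamonds $D_n(x''_n)$ converge in the Fell topology to either $\emptyset$, or $G''$, or a set $C$ for which there exist $\theta\in\partial G$, $\theta'\in\partial G'$ and $\delta\in\mathbb R$ with $$HB((\theta,\theta'),\delta-2/c)\subseteq C\subseteq HB((\theta,\theta'),\delta+1/c),$$ where these are horoballs of $(G'',\rho_c)$ (so in particular of type II, with the same center).
   Context: $G,G'$ are finitely generated groups with neutral elements $o,o'$, word metrics $d,d'$ from Cayley graphs with respect to finite generating sets, ball volumes $v_n,v'_n$, growth rates $a=\lim v_n^{1/n}>1$, $a'=\lim (v'_n)^{1/n}>1$, and $c:=\log a/\log a'$. $G''=G\times G'$ has origin $o''=(o,o')$ and metric $\rho_c((x,x'),(y,y'))=d(x,y)+d'(x',y')/c$. Fix a non-decreasing $f:\mathbb Z_{\ge0}\to\mathbb Z_{\ge0}$ and a strictly increasing sequence $(r_j)$ in $\mathbb Z_{\ge 0}$ such that $f(0)=0$, with $r'_j:=f(r_j)$ one has $0<\inf_n v'_{r'_n}/v_{r_n}\le\sup_n v'_{r'_n}/v_{r_n}<\infty$, and $\forall m\,\exists N\,\forall n\ge N: |f(n+m)-f(n)-cm|\le1$ (such $f,(r_j)$ exist). The perturbed diamond with parameter $n$ and center $x''=(x,x')$ is $D_n(x''):=\bigcup_{t=0}^{r_n}\{(y,y'): d(x,y)=r_n-t,\ d'(x',y')\le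 f(t)\}$. Fell convergence of subsets $S_n\to S$ of the countable set $G''$ means pointwise convergence of indicator functions. Horoboundary of a countable set $H$ with origin $o_H$ and boundedly finite metric $\rho$: with $\rho_x(y)=\rho(x,y)-\rho(x,o_H)$, $\overline H$ is the closure of $\{\rho_x\}$ in the pointwise topology among $1$-Lipschitz functions vanishing at $o_H$, $\partial H=\overline H\setminus H$, and for $\theta\in\partial H$ with function $d_\theta$, the horoball is $HB(\theta,\delta):=\{x: d_\theta(x)\le\delta\}$. For $\theta\in\partial G$, $\theta'\in\partial G'$, $(\theta,\theta')$ denotes the point of $\partial G''$ given by the function $(y,y')\mapsto d_\theta(y)+d_{\theta'}(y')/c$; horoballs centered at such points are called of type II. *)

theory Defs
  imports "HOL-Analysis.Analysis"
begin

text \<open>Groups are modelled as types of class group_add (not necessarily abelian);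
  the neutral element is 0 and the group law is +.\<close>

definition generates :: "'a::group_add set \<Rightarrow> bool" where
  "generates S \<longleftrightarrow> (\<forall>g. \<exists>xs. set xs \<subseteq> S \<union> uminus ` S \<and> sum_list xs = g)"

definition word_length :: "'a::group_add set \<Rightarrow> 'a \<Rightarrow> nat" where
  "word_length S g = (LEAST n. \<exists>xs. length xs = n \<and> set xs \<subseteq> S \<union> uminus ` S \<and> sum_list xs = g)"

definition word_dist :: "'a::group_add set \<Rightarrow> 'a \<Rightarrow> 'a \<Rightarrow> nat" where
  "word_dist S x y = word_length S (- x + y)"

definition ball_volume :: "'a::group_add set \<Rightarrow> nat \<Rightarrow> nat" where
  "ball_volume S n = card {x. word_dist S 0 x \<le> n}"

definition rho_c :: "'a::group_add set \<Rightarrow> 'b::group_add set \<Rightarrow> real \<Rightarrow> 'a \<times> 'b \<Rightarrow> 'a \<times> 'b \<Rightarrow> real" where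
  "rho_c S S' c p q = real (word_dist S (fst p) (fst q)) + real (word_dist S' (snd p) (snd q)) / c"

definition perturbed_diamond ::
  "'a::group_add set \<Rightarrow> 'b::group_add set \<Rightarrow> (nat \<Rightarrow> nat) \<Rightarrow> nat \<Rightarrow> 'a \<times> 'b \<Rightarrow> ('a \<times> 'b) set" where
  "perturbed_diamond S S' f R x =
     (\<Union>t\<in>{0..R}. {(y, y'). word_dist S (fst x) y = R - t \<and> word_dist S' (snd x) y' \<le> f t})"

text \<open>Fell convergence on a countable discrete set: pointwise convergence of indicators.\<close>
definition fell_converges :: "(nat \<Rightarrow> 'h set) \<Rightarrow> 'h set \<Rightarrow> bool" where
  "fell_converges A C \<longleftrightarrow> (\<forall>z. (\<lambda>k. indicator (A k) z :: real) \<longlonglongrightarrow> indicator C z)"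

text \<open>Horofunction compactification (pointwise topology on functions to the reals).\<close>
definition horo_fun :: "('h \<Rightarrow> 'h \<Rightarrow> real) \<Rightarrow> 'h \<Rightarrow> 'h \<Rightarrow> 'h \<Rightarrow> real" where
  "horo_fun \<rho> o' x = (\<lambda>y. \<rho> x y - \<rho> x o')"

definition horo_closure :: "('h \<Rightarrow> 'h \<Rightarrow> real) \<Rightarrow> 'h \<Rightarrow> ('h \<Rightarrow> real) set" where
  "horo_closure \<rho> o' = closure (range (horo_fun \<rho> o'))"

definition horoboundary :: "('h \<Rightarrow> 'h \<Rightarrow> real) \<Rightarrow> 'h \<Rightarrow> ('h \<Rightarrow> real) set" where
  "horoboundary \<rho> o' = horo_closure \<rho> o' - range (horo_fun \<rho> o')"

definition horoball :: "('h \<Rightarrow> real) \<Rightarrow> real \<Rightarrow> 'h set" where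
  "horoball \<theta> \<delta> = {x. \<theta> x \<le> \<delta>}"

definition pair_horo :: "real \<Rightarrow> ('a \<Rightarrow> real) \<Rightarrow> ('b \<Rightarrow> real) \<Rightarrow> 'a \<times> 'b \<Rightarrow> real" where
  "pair_horo c \<theta> \<theta>' = (\<lambda>(y, y'). \<theta> y + \<theta>' y' / c)"

end

theory Submission
  imports Defs "HOL-Library.Diagonal_Subsequence" "HOL-Library.Countable_Set"
begin


lemma wl_exists:
  assumes "generates S"
  shows "\<exists>xs. length xs = word_length S g \<and> set xs \<subseteq> S \<union> uminus ` S \<and> sum_list xs = g"
proof -
  from assms obtain xs where "set xs \<subseteq> S \<union> uminus ` S \<and> sum_list xs = g"
    unfolding generates_def by blast
  then have "\<exists>n xs. length xs = n \<and> set xs \<subseteq> S \<union> uminus ` S \<and> sum_list xs = g" by blast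
  from LeastI_ex[OF this] show ?thesis unfolding word_length_def .
qed

lemma wl_le:
  assumes "set xs \<subseteq> S \<union> uminus ` S" "sum_list xs = g"
  shows "word_length S g \<le> length xs"
  unfolding word_length_def by (rule Least_le) (use assms in blast)

lemma wl_zero: "word_length S 0 = 0"
  using wl_le[of "[]" S 0] by simp

lemma wl_eq0:
  assumes "generates S" "word_length S g = 0" shows "g = 0"
  using wl_exists[OF assms(1), of g] assms(2) by auto

lemma wl_add:
  assumes "generates S"
  shows "word_length S (g + h) \<le> word_length S g + word_length S h"
proof -
  obtain xs where xs: "length xs = word_length S g" "set xs \<subseteq> S \<union> uminus ` S" "sum_list xs = g"
    using wl_exists[OF assms] by blast
  obtain ys where ys: "length ys = word_length S h" "set ys \<subseteq> S \<union> uminus ` S" "sum_list ys = h"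
    using wl_exists[OF assms] by blast
  have "word_length S (g + h) \<le> length (xs @ ys)"
    by (rule wl_le) (use xs ys in auto)
  then show ?thesis using xs ys by simp
qed

lemma sum_list_rev_uminus:
  "sum_list (rev (map uminus xs)) = - sum_list (xs :: 'a::group_add list)"
  by (induction xs) (auto simp: minus_add)

lemma wl_uminus_le:
  assumes "generates S"
  shows "word_length S (- g) \<le> word_length S g"
proof -
  obtain xs where xs: "length xs = word_length S g" "set xs \<subseteq> S \<union> uminus ` S" "sum_list xs = g"
    using wl_exists[OF assms] by blast
  have "word_length S (- g) \<le> length (rev (map uminus xs))"
  proof (rule wl_le)
    show "set (rev (map uminus xs)) \<subseteq> S \<union> uminus ` S"
      using xs(2) by auto
    show "sum_list (rev (map uminus xs)) = - g"
      using xs(3) by (simp add: sum_list_rev_uminus)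
  qed
  then show ?thesis using xs by simp
qed

lemma wl_uminus:
  assumes "generates S"
  shows "word_length S (- g) = word_length S g"
  using wl_uminus_le[OF assms, of g] wl_uminus_le[OF assms, of "-g"] by simp

lemma wd_refl: "word_dist S x x = 0"
  by (simp add: word_dist_def wl_zero)

lemma wd_sym:
  assumes "generates S" shows "word_dist S x y = word_dist S y x"
  unfolding word_dist_def using wl_uminus[OF assms, of "- x + y"] by (simp add: minus_add)

lemma wd_triangle:
  assumes "generates S" shows "word_dist S x z \<le> word_dist S x y + word_dist S y z"
proof -
  have "- x + z = (- x + y) + (- y + z)" by (simp add: add.assoc)
  then show ?thesis unfolding word_dist_def using wl_add[OF assms, of "- x + y" "- y + z"] by simp
qed

lemma wd_eq0:
  assumes "generates S" "word_dist S x y = 0" shows "x = y"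
proof -
  have "- x + y = 0" using wl_eq0[OF assms(1)] assms(2) unfolding word_dist_def by blast
  then show ?thesis by (metis add_minus_cancel add.right_neutral)
qed

lemma wd_0_left: "word_dist S 0 y = word_length S y"
  by (simp add: word_dist_def)

lemma wd_horo_bound:
  assumes "generates S"
  shows "\<bar>int (word_dist S x y) - int (word_dist S x 0)\<bar> \<le> int (word_length S y)"
proof -
  have "word_dist S x y \<le> word_dist S x 0 + word_dist S 0 y" by (rule wd_triangle[OF assms])
  moreover have "word_dist S x 0 \<le> word_dist S x y + word_dist S y 0" by (rule wd_triangle[OF assms])
  moreover have "word_dist S y 0 = word_dist S 0 y" by (rule wd_sym[OF assms])
  ultimately show ?thesis by (simp add: wd_0_left)
qed

lemma neighbor:
  assumes "generates S" "word_dist S z x > 0"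
  shows "\<exists>s\<in>S \<union> uminus ` S. word_dist S (z + s) x < word_dist S z x"
proof -
  obtain xs where xs: "length xs = word_dist S z x" "set xs \<subseteq> S \<union> uminus ` S" "sum_list xs = - z + x"
    using wl_exists[OF assms(1), of "- z + x"] unfolding word_dist_def by blast
  then obtain s rest where xs_eq: "xs = s # rest" using assms(2) by (cases xs) auto
  have "- (z + s) + x = sum_list rest"
  proof -
    have "- (z + s) + x = - s + (- z + x)" by (simp add: minus_add add.assoc[symmetric])
    also have "\<dots> = sum_list rest" using xs(3) xs_eq by (metis add_minus_cancel sum_list.Cons)
    finally show ?thesis .
  qed
  then have "word_dist S (z + s) x \<le> length rest"
    unfolding word_dist_def by (intro wl_le) (use xs(2) xs_eq in auto)
  moreover have "s \<in> S \<union> uminus ` S" using xs(2) xs_eq by auto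
  ultimately show ?thesis using xs xs_eq by (intro bexI[of _ s]) auto
qed

lemma countable_group:
  fixes S :: "'a::group_add set"
  assumes "finite S" "generates S"
  shows "countable (UNIV :: 'a set)"
proof -
  have "UNIV = sum_list ` lists (S \<union> uminus ` S)"
    using assms(2) unfolding generates_def by (auto simp: image_iff) (metis in_listsI subsetD)
  moreover have "countable (lists (S \<union> uminus ` S))"
    using assms(1) by (intro countable_lists) (auto intro: countable_finite)
  ultimately show ?thesis by (metis countable_image)
qed



lemma freq_subseq:
  fixes P :: "nat \<Rightarrow> nat \<Rightarrow> bool"
  assumes "\<And>k N. \<exists>n>N. P k n"
  shows "\<exists>\<phi>. strict_mono \<phi> \<and> (\<forall>k. P k (\<phi> k))"
proof -
  define \<phi> where "\<phi> = rec_nat (SOME n. n > 0 \<and> P 0 n) (\<lambda>k m. SOME n. n > m \<and> P (Suc k) n)"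
  have 0: "\<phi> 0 = (SOME n. n > 0 \<and> P 0 n)" by (simp add: \<phi>_def)
  have S: "\<phi> (Suc k) = (SOME n. n > \<phi> k \<and> P (Suc k) n)" for k by (simp add: \<phi>_def)
  have P0: "P 0 (\<phi> 0)" unfolding 0 by (rule someI2_ex) (use assms in auto)
  have PS: "\<phi> (Suc k) > \<phi> k \<and> P (Suc k) (\<phi> (Suc k))" for k
    unfolding S by (rule someI_ex) (use assms in auto)
  have "strict_mono \<phi>" unfolding strict_mono_Suc_iff using PS by blast
  moreover have "P k (\<phi> k)" for k using P0 PS by (cases k) auto
  ultimately show ?thesis by blast
qed

lemma const_subseq:
  fixes X :: "nat \<Rightarrow> 'v"
  assumes "finite F" "\<forall>n\<ge>N. X n \<in> F"
  shows "\<exists>(r::nat\<Rightarrow>nat) v. strict_mono r \<and> (\<forall>k. X (r k) = v)"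
proof -
  have "{N..} \<subseteq> (\<Union>v\<in>F. {n. X n = v})" using assms(2) by auto
  moreover have "infinite {N::nat..}" by (simp add: infinite_Ici)
  ultimately have "infinite (\<Union>v\<in>F. {n. X n = v})" using finite_subset by blast
  then obtain v where "infinite {n. X n = v}" using assms(1) by blast
  then have "\<And>k M. \<exists>n>M. X n = v" unfolding infinite_nat_iff_unbounded by auto
  from freq_subseq[of "\<lambda>k n. X n = v", OF this] obtain \<phi> :: "nat \<Rightarrow> nat" where "strict_mono \<phi>" "\<forall>k. X (\<phi> k) = v" by blast
  then show ?thesis by blast
qed

lemma diag_const:
  fixes X :: "nat \<Rightarrow> nat \<Rightarrow> 'v"
  assumes "\<And>i. \<exists>F N. finite F \<and> (\<forall>n\<ge>N. X i n \<in> F)"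
  shows "\<exists>\<phi>. strict_mono \<phi> \<and> (\<forall>i. \<exists>v. eventually (\<lambda>n. X i (\<phi> n) = v) sequentially)"
proof -
  define P where "P = (\<lambda>i (s::nat\<Rightarrow>nat). \<exists>v. eventually (\<lambda>n. X i (s n) = v) sequentially)"
  interpret subseqs P
  proof
    fix i and s :: "nat \<Rightarrow> nat" assume s: "strict_mono s"
    obtain F N where F: "finite F" "\<forall>n\<ge>N. X i n \<in> F" using assms by blast
    have "\<forall>n\<ge>N. X i (s n) \<in> F" using F(2) seq_suble[OF s] le_trans by blast
    from const_subseq[OF F(1) this] obtain r :: "nat \<Rightarrow> nat" and v where "strict_mono r" "\<forall>k. X i (s (r k)) = v" by blast
    then show "\<exists>r'. strict_mono r' \<and> P i (s \<circ> r')" unfolding P_def o_def by (intro exI[of _ r] conjI exI[of _ v] always_eventually) auto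
  qed
  have "P k diagseq" for k
  proof -
    have "P k (diagseq \<circ> ((+) (Suc k)))"
    proof (rule diagseq_holds)
      fix r s :: "nat \<Rightarrow> nat" and n assume r: "strict_mono r" and "P n s"
      then obtain v where ev: "eventually (\<lambda>m. X n (s m) = v) sequentially" unfolding P_def by blast
      have "eventually (\<lambda>m. X n (s (r m)) = v) sequentially"
        using eventually_compose_filterlim[OF ev filterlim_subseq[OF r]] by simp
      then show "P n (s \<circ> r)" unfolding P_def by auto
    qed
    then obtain v where "eventually (\<lambda>m. X k (diagseq (Suc k + m)) = v) sequentially"
      unfolding P_def by auto
    then have "eventually (\<lambda>m. X k (diagseq (m + Suc k)) = v) sequentially" by (simp add: add.commute)
    then have "eventually (\<lambda>m. X k (diagseq m) = v) sequentially"
      using eventually_sequentially_seg[of "\<lambda>m. X k (diagseq m) = v" "Suc k"] by blast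
    then show ?thesis unfolding P_def by blast
  qed
  then show ?thesis using subseq_diagseq unfolding P_def by blast
qed

lemma horo_bd:
  fixes S :: "'a::group_add set" and x :: "nat \<Rightarrow> 'a" and \<theta> :: "'a \<Rightarrow> real"
  assumes fin: "finite S" and gen: "generates S"
    and esc: "filterlim (\<lambda>n. word_dist S (x n) 0) at_top sequentially"
    and lim: "\<And>y. eventually (\<lambda>n. real (word_dist S (x n) y) - real (word_dist S (x n) 0) = \<theta> y) sequentially"
  shows "\<theta> \<in> horoboundary (\<lambda>x y. real (word_dist S x y)) 0"
proof -
  let ?g = "\<lambda>n. horo_fun (\<lambda>x y. real (word_dist S x y)) 0 (x n)"
  have "limitin (product_topology (\<lambda>i. euclidean) UNIV) ?g \<theta> sequentially"
    unfolding limitin_componentwise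
    using lim by (auto simp: horo_fun_def intro!: tendsto_eventually)
  then have tl: "(?g \<longlongrightarrow> \<theta>) sequentially"
    by (simp add: euclidean_product_topology)
  have cl: "\<theta> \<in> horo_closure (\<lambda>x y. real (word_dist S x y)) 0"
    unfolding horo_closure_def
    by (rule Lim_in_closed_set[OF closed_closure _ _ tl]) (auto intro!: always_eventually closure_subset[THEN subsetD])
  have nr: "\<theta> \<notin> range (horo_fun (\<lambda>x y. real (word_dist S x y)) 0)"
  proof
    assume "\<theta> \<in> range (horo_fun (\<lambda>x y. real (word_dist S x y)) 0)"
    then obtain z where z: "\<theta> = horo_fun (\<lambda>x y. real (word_dist S x y)) 0 z" by blast
    let ?T = "S \<union> uminus ` S"
    have "finite (insert z ((+) z ` ?T))" using fin by auto
    then have e1: "eventually (\<lambda>n. \<forall>y\<in>insert z ((+) z ` ?T).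
        real (word_dist S (x n) y) - real (word_dist S (x n) 0) = \<theta> y) sequentially"
      using lim by (intro eventually_ball_finite) auto
    have e2: "eventually (\<lambda>n. word_dist S (x n) 0 > word_dist S z 0) sequentially"
      proof -
      have "eventually (\<lambda>n. word_dist S (x n) 0 \<ge> Suc (word_dist S z 0)) sequentially"
        using esc unfolding filterlim_at_top by blast
      then show ?thesis by (rule eventually_mono) simp
    qed
    obtain n where n1: "\<forall>y\<in>insert z ((+) z ` ?T).
        real (word_dist S (x n) y) - real (word_dist S (x n) 0) = \<theta> y"
      and n2: "word_dist S (x n) 0 > word_dist S z 0"
    proof -
      from eventually_conj[OF e1 e2] obtain N where "\<forall>n\<ge>N. (\<forall>y\<in>insert z ((+) z ` ?T).
        real (word_dist S (x n) y) - real (word_dist S (x n) 0) = \<theta> y) \<and> word_dist S (x n) 0 > word_dist S z 0"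
        unfolding eventually_sequentially by blast
      then show ?thesis using that by blast
    qed
    have "x n \<noteq> z" using n2 by auto
    then have "word_dist S z (x n) > 0" using wd_eq0[OF gen] by (metis gr0I)
    then obtain s where s: "s \<in> ?T" "word_dist S (z + s) (x n) < word_dist S z (x n)"
      using neighbor[OF gen] by blast
    have "\<theta> (z + s) = real (word_dist S (x n) (z + s)) - real (word_dist S (x n) 0)"
      using n1 s(1) by auto
    moreover have "\<theta> z = real (word_dist S (x n) z) - real (word_dist S (x n) 0)"
      using n1 by auto
    moreover have "word_dist S (x n) (z + s) < word_dist S (x n) z"
      using s(2) wd_sym[OF gen, of "x n"] by simp
    ultimately have "\<theta> (z + s) < \<theta> z" by simp
    moreover have "\<theta> z \<le> \<theta> (z + s)"
      unfolding z horo_fun_def by (simp add: wd_refl)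
    ultimately show False by simp
  qed
  show ?thesis using cl nr unfolding horoboundary_def by blast
qed



lemma pd_mem:
  "(y, y') \<in> perturbed_diamond S S' f R p \<longleftrightarrow>
     word_dist S (fst p) y \<le> R \<and> word_dist S' (snd p) y' \<le> f (R - word_dist S (fst p) y)"
proof
  assume "(y, y') \<in> perturbed_diamond S S' f R p"
  then obtain t where "t \<le> R" "word_dist S (fst p) y = R - t" "word_dist S' (snd p) y' \<le> f t"
    unfolding perturbed_diamond_def by auto
  moreover have "R - word_dist S (fst p) y = t" using calculation by simp
  ultimately show "word_dist S (fst p) y \<le> R \<and> word_dist S' (snd p) y' \<le> f (R - word_dist S (fst p) y)"
    by simp
next
  assume h: "word_dist S (fst p) y \<le> R \<and> word_dist S' (snd p) y' \<le> f (R - word_dist S (fst p) y)"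
  show "(y, y') \<in> perturbed_diamond S S' f R p"
    unfolding perturbed_diamond_def
    by (rule UN_I[of "R - word_dist S (fst p) y"]) (use h in auto)
qed

lemma key_arith:
  fixes c :: real and f :: "nat \<Rightarrow> nat"
  assumes h1: "int dy = int d0 + th" and h2: "int dy' = int d0' + th'"
    and hu: "u = int R - int d0" and hth: "th \<le> u"
    and hw: "w = int (f (nat u)) - int d0'"
    and he: "\<bar>real (f (nat (u - th))) - real (f (nat u)) + c * th\<bar> \<le> 1"
  shows "dy \<le> R \<and> dy' \<le> f (R - dy) \<Longrightarrow> c * th + th' \<le> w + 1"
    and "c * th + th' \<le> w - 1 \<Longrightarrow> dy \<le> R \<and> dy' \<le> f (R - dy)"
proof -
  have le: "dy \<le> R" using h1 hu hth by linarith
  have eq: "R - dy = nat (u - th)" using h1 hu hth by linarith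
  have "real dy' = real d0' + th'" using h2 by (metis of_int_add of_int_of_nat_eq)
  moreover have "real_of_int w = real (f (nat u)) - real d0'" using hw by simp
  ultimately have A: "real dy' = real (f (nat u)) - w + th'" by simp
  show "dy \<le> R \<and> dy' \<le> f (R - dy) \<Longrightarrow> c * th + th' \<le> w + 1"
  proof -
    assume "dy \<le> R \<and> dy' \<le> f (R - dy)"
    then have "real dy' \<le> real (f (nat (u - th)))" using eq by simp
    then show ?thesis using A he by linarith
  qed
  show "c * th + th' \<le> w - 1 \<Longrightarrow> dy \<le> R \<and> dy' \<le> f (R - dy)"
  proof -
    assume "c * th + th' \<le> w - 1"
    then have "real dy' \<le> real (f (nat (u - th)))" using A he by linarith
    then show ?thesis using le eq by simp
  qed
qed

lemma flin_int:
  fixes f :: "nat \<Rightarrow> nat" and c :: real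
  assumes f_lin: "\<forall>m. \<exists>N. \<forall>n\<ge>N. \<bar>real (f (n + m)) - real (f n) - c * real m\<bar> \<le> 1"
  shows "\<exists>N::int. \<forall>U\<ge>N. \<bar>real (f (nat (U - j))) - real (f (nat U)) + c * j\<bar> \<le> 1"
proof (cases "j \<ge> 0")
  case True
  obtain N where N: "\<forall>n\<ge>N. \<bar>real (f (n + nat j)) - real (f n) - c * real (nat j)\<bar> \<le> 1"
    using f_lin by blast
  show ?thesis
  proof (intro exI allI impI)
    fix U :: int assume U: "U \<ge> int N + j"
    have a: "nat (U - j) \<ge> N" using U by linarith
    have b: "nat (U - j) + nat j = nat U" using U True by linarith
    have "real (nat j) = j" using True by simp
    then show "\<bar>real (f (nat (U - j))) - real (f (nat U)) + c * j\<bar> \<le> 1"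
      using N[rule_format, OF a] b by (simp add: abs_minus_commute) linarith
  qed
next
  case False
  obtain N where N: "\<forall>n\<ge>N. \<bar>real (f (n + nat (- j))) - real (f n) - c * real (nat (- j))\<bar> \<le> 1"
    using f_lin by blast
  show ?thesis
  proof (intro exI allI impI)
    fix U :: int assume U: "U \<ge> int N"
    have a: "nat U \<ge> N" using U by linarith
    have b: "nat U + nat (- j) = nat (U - j)" using U False by linarith
    have "real (nat (- j)) = - j" using False by simp
    then show "\<bar>real (f (nat (U - j))) - real (f (nat U)) + c * j\<bar> \<le> 1"
      using N[rule_format, OF a] b by simp
  qed
qed



lemma ev_ex: "eventually P sequentially \<Longrightarrow> \<exists>n. P n"
  by (auto simp: eventually_sequentially)

theorem lemma3p3:
  fixes S :: "'a::group_add set" and S' :: "'b::group_add set"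
    and a a' c :: real and f :: "nat \<Rightarrow> nat" and r :: "nat \<Rightarrow> nat"
    and xs :: "nat \<Rightarrow> 'a \<times> 'b"
  assumes fin: "finite S" "finite S'"
    and gen: "generates S" "generates S'"
    and rate: "(\<lambda>n. real (ball_volume S n) powr (1 / real n)) \<longlonglongrightarrow> a"
              "(\<lambda>n. real (ball_volume S' n) powr (1 / real n)) \<longlonglongrightarrow> a'"
    and rate_gt: "a > 1" "a' > 1"
    and c_def: "c = ln a / ln a'"
    and f_mono: "mono f" and f0: "f 0 = 0"
    and r_mono: "strict_mono r"
    and ratio: "\<exists>m M. 0 < m \<and> (\<forall>n. m \<le> real (ball_volume S' (f (r n))) / real (ball_volume S (r n))
                       \<and> real (ball_volume S' (f (r n))) / real (ball_volume S (r n)) \<le> M)"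
    and f_lin: "\<forall>m. \<exists>N. \<forall>n\<ge>N. \<bar>real (f (n + m)) - real (f n) - c * real m\<bar> \<le> 1"
    and esc: "filterlim (\<lambda>n. word_dist S (fst (xs n)) 0) at_top sequentially"
             "filterlim (\<lambda>n. word_dist S' (snd (xs n)) 0) at_top sequentially"
  shows "\<exists>\<phi> C. strict_mono \<phi> \<and>
           fell_converges (\<lambda>k. perturbed_diamond S S' f (r (\<phi> k)) (xs (\<phi> k))) C \<and>
           (C = {} \<or> C = UNIV \<or>
            (\<exists>\<theta>\<in>horoboundary (\<lambda>x y. real (word_dist S x y)) 0.
             \<exists>\<theta>'\<in>horoboundary (\<lambda>x y. real (word_dist S' x y)) 0.
             \<exists>\<delta>::real.
               horoball (pair_horo c \<theta> \<theta>') (\<delta> - 2 / c) \<subseteq> C \<and>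
               C \<subseteq> horoball (pair_horo c \<theta> \<theta>') (\<delta> + 1 / c)))"
proof -
  have c_pos: "c > 0" using rate_gt c_def by simp
  define x where "x n = fst (xs n)" for n
  define x' where "x' n = snd (xs n)" for n
  define th where "th n y = int (word_dist S (x n) y) - int (word_dist S (x n) 0)" for n y
  define th' where "th' n y' = int (word_dist S' (x' n) y') - int (word_dist S' (x' n) 0)" for n y'
  define u where "u n = int (r n) - int (word_dist S (x n) 0)" for n
  define w where "w n = int (f (nat (u n))) - int (word_dist S' (x' n) 0)" for n
  define D where "D n = perturbed_diamond S S' f (r n) (xs n)" for n
  have Dk: "(\<lambda>k. perturbed_diamond S S' f (r (\<phi> k)) (xs (\<phi> k))) = (\<lambda>k. D (\<phi> k))" for \<phi> :: "nat \<Rightarrow> nat"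
    by (simp add: D_def)
  have memD: "(y, y') \<in> D n \<longleftrightarrow> word_dist S (x n) y \<le> r n \<and>
      word_dist S' (x' n) y' \<le> f (r n - word_dist S (x n) y)" for n y y'
    unfolding D_def x_def x'_def by (rule pd_mem)
  have thb: "\<bar>th n y\<bar> \<le> int (word_length S y)" for n y
    unfolding th_def by (rule wd_horo_bound[OF gen(1)])
  have thb': "\<bar>th' n y'\<bar> \<le> int (word_length S' y')" for n y'
    unfolding th'_def by (rule wd_horo_bound[OF gen(2)])
  have core: "eventually (\<lambda>n. ((y, y') \<in> D (\<psi> n) \<longrightarrow> c * th (\<psi> n) y + th' (\<psi> n) y' \<le> w (\<psi> n) + 1) \<and>
      (c * th (\<psi> n) y + th' (\<psi> n) y' \<le> w (\<psi> n) - 1 \<longrightarrow> (y, y') \<in> D (\<psi> n))) sequentially"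
    if psi: "\<forall>n. u (\<psi> n) \<ge> int n" for \<psi> :: "nat \<Rightarrow> nat" and y y'
  proof -
    define k where "k = int (word_length S y)"
    have "\<forall>j\<in>{-k..k}. eventually (\<lambda>n. \<bar>real (f (nat (u (\<psi> n) - j))) - real (f (nat (u (\<psi> n)))) + c * j\<bar> \<le> 1) sequentially"
    proof
      fix j :: int
      obtain N :: int where N: "\<forall>U\<ge>N. \<bar>real (f (nat (U - j))) - real (f (nat U)) + c * j\<bar> \<le> 1"
        using flin_int[OF f_lin, of j] by blast
      have "eventually (\<lambda>n. n \<ge> nat N) sequentially" by (rule eventually_ge_at_top)
      then show "eventually (\<lambda>n. \<bar>real (f (nat (u (\<psi> n) - j))) - real (f (nat (u (\<psi> n)))) + c * j\<bar> \<le> 1) sequentially"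
      proof (rule eventually_mono)
        fix n assume "n \<ge> nat N"
        then have "u (\<psi> n) \<ge> N" using psi[rule_format, of n] by linarith
        then show "\<bar>real (f (nat (u (\<psi> n) - j))) - real (f (nat (u (\<psi> n)))) + c * j\<bar> \<le> 1" using N by blast
      qed
    qed
    then have E1: "eventually (\<lambda>n. \<forall>j\<in>{-k..k}. \<bar>real (f (nat (u (\<psi> n) - j))) - real (f (nat (u (\<psi> n)))) + c * j\<bar> \<le> 1) sequentially"
      by (intro eventually_ball_finite) auto
    have E2: "eventually (\<lambda>n. n \<ge> nat k) sequentially" by (rule eventually_ge_at_top)
    show ?thesis using eventually_conj[OF E1 E2]
    proof (rule eventually_mono)
      fix n assume h: "(\<forall>j\<in>{-k..k}. \<bar>real (f (nat (u (\<psi> n) - j))) - real (f (nat (u (\<psi> n)))) + c * j\<bar> \<le> 1) \<and> n \<ge> nat k"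
      have thk: "th (\<psi> n) y \<in> {-k..k}" using thb[of "\<psi> n" y] unfolding k_def by auto
      have h4: "th (\<psi> n) y \<le> u (\<psi> n)" using thk h psi[rule_format, of n] by auto
      have e: "\<bar>real (f (nat (u (\<psi> n) - th (\<psi> n) y))) - real (f (nat (u (\<psi> n)))) + c * th (\<psi> n) y\<bar> \<le> 1"
        using h thk by blast
      have h1: "int (word_dist S (x (\<psi> n)) y) = int (word_dist S (x (\<psi> n)) 0) + th (\<psi> n) y"
        by (simp add: th_def)
      have h2: "int (word_dist S' (x' (\<psi> n)) y') = int (word_dist S' (x' (\<psi> n)) 0) + th' (\<psi> n) y'"
        by (simp add: th'_def)
      have h3: "u (\<psi> n) = int (r (\<psi> n)) - int (word_dist S (x (\<psi> n)) 0)" by (simp add: u_def)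
      have h5: "w (\<psi> n) = int (f (nat (u (\<psi> n)))) - int (word_dist S' (x' (\<psi> n)) 0)" by (simp add: w_def)
      note K = key_arith[OF h1 h2 h3 h4 h5 e]
      show "((y, y') \<in> D (\<psi> n) \<longrightarrow> c * th (\<psi> n) y + th' (\<psi> n) y' \<le> w (\<psi> n) + 1) \<and>
        (c * th (\<psi> n) y + th' (\<psi> n) y' \<le> w (\<psi> n) - 1 \<longrightarrow> (y, y') \<in> D (\<psi> n))"
        using K memD by blast
    qed
  qed
  show ?thesis
  proof (cases "\<forall>M N. \<exists>n>N. u n \<ge> M")
    case False
    then obtain M N where MN: "\<forall>n>N. u n < M" by (meson not_le)
    have "fell_converges (\<lambda>k. D (id k)) {}"
      unfolding fell_converges_def
    proof
      fix z :: "'a \<times> 'b"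
      obtain y y' where z: "z = (y, y')" by (cases z)
      define B where "B = f (nat (M + int (word_length S y)))"
      have "eventually (\<lambda>n. word_dist S' (x' n) 0 \<ge> B + word_length S' y' + 1) sequentially"
        using esc(2) unfolding filterlim_at_top x'_def by blast
      moreover have "eventually (\<lambda>n. n > N) sequentially" by (rule eventually_gt_at_top)
      ultimately have "eventually (\<lambda>n. z \<notin> D n) sequentially"
      proof (rule eventually_elim2)
        fix n assume A: "word_dist S' (x' n) 0 \<ge> B + word_length S' y' + 1" and "n > N"
        then have un: "u n < M" using MN by blast
        show "z \<notin> D n"
        proof
          assume "z \<in> D n"
          then have m: "word_dist S (x n) y \<le> r n" "word_dist S' (x' n) y' \<le> f (r n - word_dist S (x n) y)"
            using memD z by auto
          have "r n - word_dist S (x n) y \<le> nat (M + int (word_length S y))"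
            using un thb[of n y] m(1) unfolding u_def th_def by linarith
          then have "f (r n - word_dist S (x n) y) \<le> B" unfolding B_def using f_mono by (rule monoD[rotated])
          moreover have "word_dist S' (x' n) 0 \<le> word_dist S' (x' n) y' + word_length S' y'"
            using thb'[of n y'] unfolding th'_def by linarith
          ultimately show False using A m(2) by linarith
        qed
      qed
      then show "(\<lambda>k. indicator (D (id k)) z :: real) \<longlonglongrightarrow> indicator {} z"
        by (intro tendsto_eventually) (auto elim: eventually_mono)
    qed
    then show ?thesis unfolding Dk[symmetric]
      by (intro exI[of _ id] exI[of _ "{}"]) (auto simp: strict_mono_def)
  next
    case True
    have "\<exists>n>N. u n \<ge> int k" for k N using True by blast
    from freq_subseq[of "\<lambda>k n. u n \<ge> int k", OF this]
    obtain \<phi>1 :: "nat \<Rightarrow> nat" where p1: "strict_mono \<phi>1" "\<forall>k. u (\<phi>1 k) \<ge> int k" by blast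
    have psi_ok: "\<forall>n. u ((\<phi>1 \<circ> \<phi>2) n) \<ge> int n" if "strict_mono \<phi>2" for \<phi>2 :: "nat \<Rightarrow> nat"
    proof
      fix n
      have "\<phi>2 n \<ge> n" using seq_suble[OF that] .
      then show "u ((\<phi>1 \<circ> \<phi>2) n) \<ge> int n" using p1(2)[rule_format, of "\<phi>2 n"] by simp
    qed
    have psi_mono: "strict_mono (\<phi>1 \<circ> \<phi>2)" if "strict_mono \<phi>2" for \<phi>2 :: "nat \<Rightarrow> nat"
      using p1(1) that by (rule strict_mono_o)
    show ?thesis
    proof (cases "\<forall>M N. \<exists>n>N. w (\<phi>1 n) \<ge> M")
      case True
      have "\<exists>n>N. w (\<phi>1 n) \<ge> int k" for k N using True by blast
      from freq_subseq[of "\<lambda>k n. w (\<phi>1 n) \<ge> int k", OF this]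
      obtain \<phi>2 :: "nat \<Rightarrow> nat" where p2: "strict_mono \<phi>2" "\<forall>k. w (\<phi>1 (\<phi>2 k)) \<ge> int k" by blast
      define \<psi> where "\<psi> = \<phi>1 \<circ> \<phi>2"
      have "fell_converges (\<lambda>k. D (\<psi> k)) UNIV"
        unfolding fell_converges_def
      proof
        fix z :: "'a \<times> 'b"
        obtain y y' where z: "z = (y, y')" by (cases z)
        define k where "k = int (word_length S y)"
        define k' where "k' = int (word_length S' y')"
        have "eventually (\<lambda>n. n \<ge> nat \<lceil>c * k + k' + 1\<rceil>) sequentially" by (rule eventually_ge_at_top)
        with core[OF psi_ok[OF p2(1)], of y y', folded \<psi>_def]
        have "eventually (\<lambda>n. z \<in> D (\<psi> n)) sequentially"
        proof (rule eventually_elim2)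
          fix n assume
                B: "((y, y') \<in> D (\<psi> n) \<longrightarrow> c * th (\<psi> n) y + th' (\<psi> n) y' \<le> w (\<psi> n) + 1) \<and>
      (c * th (\<psi> n) y + th' (\<psi> n) y' \<le> w (\<psi> n) - 1 \<longrightarrow> (y, y') \<in> D (\<psi> n))"
            and A: "n \<ge> nat \<lceil>c * k + k' + 1\<rceil>"
          have "c * k + k' + 1 \<le> real (nat \<lceil>c * k + k' + 1\<rceil>)" by (rule real_nat_ceiling_ge)
          also have "\<dots> \<le> real n" using A by simp
          also have "\<dots> \<le> w (\<psi> n)" using p2(2)[rule_format, of n] unfolding \<psi>_def by simp
          finally have w1: "c * k + k' + 1 \<le> w (\<psi> n)" .
          have "real_of_int (th (\<psi> n) y) \<le> k" using thb[of "\<psi> n" y] unfolding k_def by simp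
          then have t1: "c * th (\<psi> n) y \<le> c * k" using c_pos by (intro mult_left_mono) auto
          have t2: "real_of_int (th' (\<psi> n) y') \<le> k'" using thb'[of "\<psi> n" y'] unfolding k'_def by simp
          have "c * th (\<psi> n) y + th' (\<psi> n) y' \<le> w (\<psi> n) - 1" using w1 t1 t2 by linarith
          then show "z \<in> D (\<psi> n)" using B z by simp
        qed
        then show "(\<lambda>k. indicator (D (\<psi> k)) z :: real) \<longlonglongrightarrow> indicator UNIV z"
          by (intro tendsto_eventually) (auto elim: eventually_mono)
      qed
      then show ?thesis unfolding Dk[symmetric]
        by (intro exI[of _ \<psi>] exI[of _ UNIV]) (auto simp: \<psi>_def psi_mono[OF p2(1)])
    next
      case False
      then obtain M1 N1 where MN1: "\<forall>n>N1. w (\<phi>1 n) < M1" by (meson not_le)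
      show ?thesis
      proof (cases "\<forall>M N. \<exists>n>N. w (\<phi>1 n) \<le> - M")
        case True
      have "\<exists>n>N. w (\<phi>1 n) \<le> - int k" for k N using True by blast
      from freq_subseq[of "\<lambda>k n. w (\<phi>1 n) \<le> - int k", OF this]
      obtain \<phi>2 :: "nat \<Rightarrow> nat" where p2: "strict_mono \<phi>2" "\<forall>k. w (\<phi>1 (\<phi>2 k)) \<le> - int k" by blast
      define \<psi> where "\<psi> = \<phi>1 \<circ> \<phi>2"
      have "fell_converges (\<lambda>k. D (\<psi> k)) {}"
        unfolding fell_converges_def
      proof
        fix z :: "'a \<times> 'b"
        obtain y y' where z: "z = (y, y')" by (cases z)
        define k where "k = int (word_length S y)"
        define k' where "k' = int (word_length S' y')"
        have "eventually (\<lambda>n. n \<ge> nat \<lceil>c * k + k' + 2\<rceil>) sequentially" by (rule eventually_ge_at_top)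
        with core[OF psi_ok[OF p2(1)], of y y', folded \<psi>_def]
        have "eventually (\<lambda>n. z \<notin> D (\<psi> n)) sequentially"
        proof (rule eventually_elim2)
          fix n assume
                B: "((y, y') \<in> D (\<psi> n) \<longrightarrow> c * th (\<psi> n) y + th' (\<psi> n) y' \<le> w (\<psi> n) + 1) \<and>
      (c * th (\<psi> n) y + th' (\<psi> n) y' \<le> w (\<psi> n) - 1 \<longrightarrow> (y, y') \<in> D (\<psi> n))"
            and A: "n \<ge> nat \<lceil>c * k + k' + 2\<rceil>"
          have "c * k + k' + 2 \<le> real (nat \<lceil>c * k + k' + 2\<rceil>)" by (rule real_nat_ceiling_ge)
          also have "\<dots> \<le> real n" using A by simp
          also have "\<dots> \<le> - w (\<psi> n)" using p2(2)[rule_format, of n] unfolding \<psi>_def by simp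
          finally have w1: "c * k + k' + 2 \<le> - w (\<psi> n)" .
          have "- k \<le> real_of_int (th (\<psi> n) y)" using thb[of "\<psi> n" y] unfolding k_def by simp
          then have t1: "c * (- k) \<le> c * th (\<psi> n) y" using c_pos by (intro mult_left_mono) auto
          have t2: "- k' \<le> real_of_int (th' (\<psi> n) y')" using thb'[of "\<psi> n" y'] unfolding k'_def by simp
          show "z \<notin> D (\<psi> n)"
          proof
            assume "z \<in> D (\<psi> n)"
            then have "c * th (\<psi> n) y + th' (\<psi> n) y' \<le> w (\<psi> n) + 1" using B z by simp
            then show False using w1 t1 t2 by linarith
          qed
        qed
        then show "(\<lambda>k. indicator (D (\<psi> k)) z :: real) \<longlonglongrightarrow> indicator {} z"
          by (intro tendsto_eventually) (auto elim: eventually_mono)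
      qed
      then show ?thesis unfolding Dk[symmetric]
        by (intro exI[of _ \<psi>] exI[of _ "{}"]) (auto simp: \<psi>_def psi_mono[OF p2(1)])
      next
        case False
        then obtain M2 N2 where MN2: "\<forall>n>N2. w (\<phi>1 n) > - M2" by (meson not_le)
        have cA: "countable (UNIV :: 'a set)" by (rule countable_group[OF fin(1) gen(1)])
        have cB: "countable (UNIV :: 'b set)" by (rule countable_group[OF fin(2) gen(2)])
        have "countable ((UNIV :: 'a set) \<times> (UNIV :: 'b set))" by (intro countable_SIGMA cA cB)
        then have cAB: "countable (UNIV :: ('a \<times> 'b) set)" by simp
        define ea where "ea = from_nat_into (UNIV :: 'a set)"
        define eb where "eb = from_nat_into (UNIV :: 'b set)"
        define ep where "ep = from_nat_into (UNIV :: ('a \<times> 'b) set)"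
        have ea: "\<exists>i. ea i = y" for y using from_nat_into_surj[OF cA, of y] unfolding ea_def by auto
        have eb: "\<exists>i. eb i = y'" for y' using from_nat_into_surj[OF cB, of y'] unfolding eb_def by auto
        have ep: "\<exists>i. ep i = z" for z using from_nat_into_surj[OF cAB, of z] unfolding ep_def by auto
        define X where "X i n = (th (\<phi>1 n) (ea i), th' (\<phi>1 n) (eb i), w (\<phi>1 n), ep i \<in> D (\<phi>1 n))" for i n
        have "\<exists>F N. finite F \<and> (\<forall>n\<ge>N. X i n \<in> F)" for i
        proof (intro exI conjI)
          let ?F = "{- int (word_length S (ea i)) .. int (word_length S (ea i))} \<times>
            {- int (word_length S' (eb i)) .. int (word_length S' (eb i))} \<times> {- M2 .. M1} \<times> (UNIV :: bool set)"
          show "finite ?F" by simp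
          show "\<forall>n\<ge>Suc (N1 + N2). X i n \<in> ?F"
          proof (intro allI impI)
            fix n assume n: "n \<ge> Suc (N1 + N2)"
            have "w (\<phi>1 n) < M1" using MN1 n by auto
            moreover have "w (\<phi>1 n) > - M2" using MN2 n by auto
            moreover have "\<bar>th (\<phi>1 n) (ea i)\<bar> \<le> int (word_length S (ea i))" by (rule thb)
            moreover have "\<bar>th' (\<phi>1 n) (eb i)\<bar> \<le> int (word_length S' (eb i))" by (rule thb')
            ultimately show "X i n \<in> ?F" unfolding X_def by (auto simp: abs_le_iff)
          qed
        qed
        from diag_const[of X, OF this] obtain \<phi>2 :: "nat \<Rightarrow> nat" where
          p2: "strict_mono \<phi>2" and evX: "\<forall>i. \<exists>v. eventually (\<lambda>n. X i (\<phi>2 n) = v) sequentially" by blast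
        define \<psi> where "\<psi> = \<phi>1 \<circ> \<phi>2"
        have ex_th: "\<exists>v. eventually (\<lambda>n. th (\<psi> n) y = v) sequentially" for y
        proof -
          obtain i where i: "ea i = y" using ea by blast
          obtain v where "eventually (\<lambda>n. X i (\<phi>2 n) = v) sequentially" using evX by blast
          then have "eventually (\<lambda>n. th (\<psi> n) y = fst v) sequentially"
            by (rule eventually_mono) (auto simp: X_def \<psi>_def i)
          then show ?thesis by blast
        qed
        have ex_th': "\<exists>v. eventually (\<lambda>n. th' (\<psi> n) y' = v) sequentially" for y'
        proof -
          obtain i where i: "eb i = y'" using eb by blast
          obtain v where "eventually (\<lambda>n. X i (\<phi>2 n) = v) sequentially" using evX by blast
          then have "eventually (\<lambda>n. th' (\<psi> n) y' = fst (snd v)) sequentially"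
            by (rule eventually_mono) (auto simp: X_def \<psi>_def i)
          then show ?thesis by blast
        qed
        have ex_w: "\<exists>v. eventually (\<lambda>n. w (\<psi> n) = v) sequentially"
        proof -
          obtain v where "eventually (\<lambda>n. X 0 (\<phi>2 n) = v) sequentially" using evX by blast
          then have "eventually (\<lambda>n. w (\<psi> n) = fst (snd (snd v))) sequentially"
            by (rule eventually_mono) (auto simp: X_def \<psi>_def)
          then show ?thesis by blast
        qed
        have ex_D: "\<exists>b. eventually (\<lambda>n. (z \<in> D (\<psi> n)) = b) sequentially" for z
        proof -
          obtain i where i: "ep i = z" using ep by blast
          obtain v where "eventually (\<lambda>n. X i (\<phi>2 n) = v) sequentially" using evX by blast
          then have "eventually (\<lambda>n. (z \<in> D (\<psi> n)) = snd (snd (snd v))) sequentially"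
            by (rule eventually_mono) (auto simp: X_def \<psi>_def i)
          then show ?thesis by blast
        qed
        define \<theta>i where "\<theta>i y = (SOME v. eventually (\<lambda>n. th (\<psi> n) y = v) sequentially)" for y
        define \<theta>i' where "\<theta>i' y' = (SOME v. eventually (\<lambda>n. th' (\<psi> n) y' = v) sequentially)" for y'
        define w0 where "w0 = (SOME v. eventually (\<lambda>n. w (\<psi> n) = v) sequentially)"
        have ev_th: "eventually (\<lambda>n. th (\<psi> n) y = \<theta>i y) sequentially" for y
          unfolding \<theta>i_def by (rule someI_ex[OF ex_th])
        have ev_th': "eventually (\<lambda>n. th' (\<psi> n) y' = \<theta>i' y') sequentially" for y'
          unfolding \<theta>i'_def by (rule someI_ex[OF ex_th'])
        have ev_w: "eventually (\<lambda>n. w (\<psi> n) = w0) sequentially"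
          unfolding w0_def by (rule someI_ex[OF ex_w])
        define C where "C = {z. eventually (\<lambda>n. z \<in> D (\<psi> n)) sequentially}"
        have fell: "fell_converges (\<lambda>k. D (\<psi> k)) C"
          unfolding fell_converges_def
        proof
          fix z :: "'a \<times> 'b"
          obtain b where b: "eventually (\<lambda>n. (z \<in> D (\<psi> n)) = b) sequentially" using ex_D by blast
          show "(\<lambda>k. indicator (D (\<psi> k)) z :: real) \<longlonglongrightarrow> indicator C z"
          proof (cases b)
            case True
            then have ev: "eventually (\<lambda>n. z \<in> D (\<psi> n)) sequentially" using b by (auto elim: eventually_mono)
            then have "z \<in> C" by (simp add: C_def)
            then show ?thesis using ev by (intro tendsto_eventually) (auto elim: eventually_mono)
          next
            case False
            then have ev: "eventually (\<lambda>n. z \<notin> D (\<psi> n)) sequentially" using b by (auto elim: eventually_mono)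
            have "z \<notin> C"
            proof
              assume "z \<in> C"
              then have "eventually (\<lambda>n. z \<in> D (\<psi> n)) sequentially" by (simp add: C_def)
              from ev_ex[OF eventually_conj[OF ev this]] show False by blast
            qed
            then show ?thesis using ev by (intro tendsto_eventually) (auto elim: eventually_mono)
          qed
        qed
        have psm: "strict_mono \<psi>" unfolding \<psi>_def by (rule psi_mono[OF p2])
        define \<theta> where "\<theta> y = real_of_int (\<theta>i y)" for y
        define \<theta>' where "\<theta>' y' = real_of_int (\<theta>i' y')" for y'
        have esc1: "filterlim (\<lambda>n. word_dist S (x (\<psi> n)) 0) at_top sequentially"
          using filterlim_compose[OF esc(1) filterlim_subseq[OF psm]] by (simp add: x_def)
        have esc2: "filterlim (\<lambda>n. word_dist S' (x' (\<psi> n)) 0) at_top sequentially"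
          using filterlim_compose[OF esc(2) filterlim_subseq[OF psm]] by (simp add: x'_def)
        have hA: "\<theta> \<in> horoboundary (\<lambda>x y. real (word_dist S x y)) 0"
        proof (rule horo_bd[OF fin(1) gen(1) esc1])
          fix y
          show "eventually (\<lambda>n. real (word_dist S (x (\<psi> n)) y) - real (word_dist S (x (\<psi> n)) 0) = \<theta> y) sequentially"
            using ev_th[of y]
          proof (rule eventually_mono)
            fix n assume "th (\<psi> n) y = \<theta>i y"
            then have "real_of_int (th (\<psi> n) y) = \<theta> y" by (simp add: \<theta>_def)
            then show "real (word_dist S (x (\<psi> n)) y) - real (word_dist S (x (\<psi> n)) 0) = \<theta> y"
              by (simp add: th_def)
          qed
        qed
        have hB: "\<theta>' \<in> horoboundary (\<lambda>x y. real (word_dist S' x y)) 0"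
        proof (rule horo_bd[OF fin(2) gen(2) esc2])
          fix y'
          show "eventually (\<lambda>n. real (word_dist S' (x' (\<psi> n)) y') - real (word_dist S' (x' (\<psi> n)) 0) = \<theta>' y') sequentially"
            using ev_th'[of y']
          proof (rule eventually_mono)
            fix n assume "th' (\<psi> n) y' = \<theta>i' y'"
            then have "real_of_int (th' (\<psi> n) y') = \<theta>' y'" by (simp add: \<theta>'_def)
            then show "real (word_dist S' (x' (\<psi> n)) y') - real (word_dist S' (x' (\<psi> n)) 0) = \<theta>' y'"
              by (simp add: th'_def)
          qed
        qed
        define \<delta> where "\<delta> = real_of_int w0 / c"
        have all4: "eventually (\<lambda>n. (((y, y') \<in> D (\<psi> n) \<longrightarrow> c * th (\<psi> n) y + th' (\<psi> n) y' \<le> w (\<psi> n) + 1) \<and>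
            (c * th (\<psi> n) y + th' (\<psi> n) y' \<le> w (\<psi> n) - 1 \<longrightarrow> (y, y') \<in> D (\<psi> n))) \<and>
            th (\<psi> n) y = \<theta>i y \<and> th' (\<psi> n) y' = \<theta>i' y' \<and> w (\<psi> n) = w0) sequentially" for y y'
          by (rule eventually_conj[OF core[OF psi_ok[OF p2], of y y', folded \<psi>_def]
                eventually_conj[OF ev_th[of y] eventually_conj[OF ev_th'[of y'] ev_w]]])
        have low: "horoball (pair_horo c \<theta> \<theta>') (\<delta> - 2 / c) \<subseteq> C"
        proof
          fix z assume "z \<in> horoball (pair_horo c \<theta> \<theta>') (\<delta> - 2 / c)"
          moreover obtain y y' where z: "z = (y, y')" by (cases z)
          ultimately have h: "\<theta> y + \<theta>' y' / c \<le> real_of_int w0 / c - 2 / c"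
            by (simp add: horoball_def pair_horo_def \<delta>_def)
          have "c * (\<theta> y + \<theta>' y' / c) \<le> c * (real_of_int w0 / c - 2 / c)"
            using h c_pos by (intro mult_left_mono) auto
          then have "c * \<theta> y + \<theta>' y' \<le> real_of_int w0 - 2"
            using c_pos by (simp add: distrib_left right_diff_distrib)
          then have h': "c * \<theta>i y + \<theta>i' y' \<le> w0 - 1"
            by (simp add: \<theta>_def \<theta>'_def)
          have "eventually (\<lambda>n. z \<in> D (\<psi> n)) sequentially"
            using all4[of y y'] by (rule eventually_mono) (use h' z in auto)
          then show "z \<in> C" by (simp add: C_def)
        qed
        have up: "C \<subseteq> horoball (pair_horo c \<theta> \<theta>') (\<delta> + 1 / c)"
        proof
          fix z assume "z \<in> C"
          then have evz: "eventually (\<lambda>n. z \<in> D (\<psi> n)) sequentially" by (simp add: C_def)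
          obtain y y' where z: "z = (y, y')" by (cases z)
          obtain n where n: "z \<in> D (\<psi> n)" "((y, y') \<in> D (\<psi> n) \<longrightarrow> c * th (\<psi> n) y + th' (\<psi> n) y' \<le> w (\<psi> n) + 1)"
            "th (\<psi> n) y = \<theta>i y" "th' (\<psi> n) y' = \<theta>i' y'" "w (\<psi> n) = w0"
            using ev_ex[OF eventually_conj[OF evz all4[of y y']]] by blast
          then have h': "c * \<theta>i y + \<theta>i' y' \<le> w0 + 1" using z by auto
          then have "c * \<theta> y + \<theta>' y' \<le> real_of_int w0 + 1"
            by (simp add: \<theta>_def \<theta>'_def)
          then have "(c * \<theta> y + \<theta>' y') / c \<le> (real_of_int w0 + 1) / c"
            using c_pos by (intro divide_right_mono) auto
          then have "\<theta> y + \<theta>' y' / c \<le> real_of_int w0 / c + 1 / c"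
            using c_pos by (simp add: add_divide_distrib)
          then show "z \<in> horoball (pair_horo c \<theta> \<theta>') (\<delta> + 1 / c)"
            by (simp add: horoball_def pair_horo_def \<delta>_def z)
        qed
        have "fell_converges (\<lambda>k. perturbed_diamond S S' f (r (\<psi> k)) (xs (\<psi> k))) C"
          using fell by (simp only: Dk)
        then show ?thesis using psm hA hB low up by blast
      qed
    qed
  qed
qed

end
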